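(* Let $A,B\subseteq\mathbb{R}^n$ be finite nonempty sets (Euclidean metric), $\beta>0$ and $\delta>d^N_P(A,B)$. For all $r>0$ and $s>\delta$, $$\overline{\mathrm{Cr}}^\beta_{r,s}(A)\subseteq\overline{\mathrm{Cr}}^\beta_{r',s-\delta}(B),\qquad \overline{\mathrm{Cr}}^\beta_{r,s}(B)\subseteq\overline{\mathrm{Cr}}^\beta_{r',s-\delta}(A),$$ $$\overline{\mathrm{DCr}}^\beta_{r,s}(A)\subseteq\overline{\mathrm{DCr}}^\beta_{r'',s-\delta}(B),\qquad \overline{\mathrm{DCr}}^\beta_{r,s}(B)\subseteq\overline{\mathrm{DCr}}^\beta_{r'',s-\delta}(A),$$ where $r'=\max\{2(r+\beta\delta),(1+\beta^{-1})r+\delta\}$ and $r''=\max\{1,2\beta\}\big((1+\beta^{-1})r+\delta\big)$.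
   Context: $d$ Euclidean, $\bar B_d(x,r)=\{y:d(x,y)\le r\}$. For finite $A$, $k>0$, $x\in\mathbb{R}^n$, $\mathrm{core}^A_k(x)$ is the distance from $x$ to its $\lceil k\rceil$-th nearest neighbor in $A$ (each point of $A$ counted once, $x$ itself counting if $x\in A$); equivalently $\min\{r\ge0:|\bar B_d(x,r)\cap A|\ge k\}$, and $\infty$ if $k>|A|$. For $\beta>0$: $\Lambda^\beta_k(a,x)=\max\{\beta\,\mathrm{core}^A_k(a),d(a,x)\}$, $B^\beta_{r,k}(a)=\{x:\Lambda^\beta_k(a,x)\le r\}$, $\mathrm{Cr}^\beta_{r,k}(A)=\bigcup_{a\in A}B^\beta_{r,k}(a)$, $\mathrm{Vor}_A(a)=\{x:d(a,x)\le d(a',x)\ \forall a'\in A\}$, $\mathrm{DCr}^\beta_{r,k}(A)=\bigcup_{a\in A}\big(B^\beta_{r,k}(a)\cap\mathrm{Vor}_A(a)\big)$. Normalized versions: $\overline{\mathrm{Cr}}^\beta_{r,s}(A)=\mathrm{Cr}^\beta_{r,s|A|}(A)$ and $\overline{\mathrm{DCr}}^\beta_{r,s}(A)=\mathrm{DCr}^\beta_{r,s|A|}(A)$ for $r,s>0$ (similarly for $B$). For $S\subseteq\mathbb{R}^n$, $\delta\ge0$: $S^\delta=\bigcup_{x\in S}\bar B_d(x,\delta)$. Normalized Prohorov distance: $d^N_P(A,B)=\sup_{S\text{ closed}}\inf\{\delta\ge0:\tfrac{|S\cap A|}{|A|}\le\tfrac{|S^\delta\cap B|}{|B|}+\delta\text{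 and }\tfrac{|S\cap B|}{|B|}\le\tfrac{|S^\delta\cap A|}{|A|}+\delta\}$. *)

theory Defs
  imports "HOL-Analysis.Analysis" "HOL-Library.Extended_Real"
begin

definition core :: "(real^'n) set \<Rightarrow> real \<Rightarrow> real^'n \<Rightarrow> ereal" where
  "core A k x = (if real (card A) < k then \<infinity>
     else ereal (Inf {r. r \<ge> 0 \<and> k \<le> real (card (cball x r \<inter> A))}))"

definition Lam :: "real \<Rightarrow> (real^'n) set \<Rightarrow> real \<Rightarrow> real^'n \<Rightarrow> real^'n \<Rightarrow> ereal" where
  "Lam \<beta> A k a x = max (ereal \<beta> * core A k a) (ereal (dist a x))"

definition Bcr :: "real \<Rightarrow> (real^'n) set \<Rightarrow> real \<Rightarrow> real \<Rightarrow> real^'n \<Rightarrow> (real^'n) set" where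
  "Bcr \<beta> A r k a = {x. Lam \<beta> A k a x \<le> ereal r}"

definition Cr :: "real \<Rightarrow> (real^'n) set \<Rightarrow> real \<Rightarrow> real \<Rightarrow> (real^'n) set" where
  "Cr \<beta> A r k = (\<Union>a\<in>A. Bcr \<beta> A r k a)"

definition Vor :: "(real^'n) set \<Rightarrow> real^'n \<Rightarrow> (real^'n) set" where
  "Vor A a = {x. \<forall>a'\<in>A. dist a x \<le> dist a' x}"

definition DCr :: "real \<Rightarrow> (real^'n) set \<Rightarrow> real \<Rightarrow> real \<Rightarrow> (real^'n) set" where
  "DCr \<beta> A r k = (\<Union>a\<in>A. Bcr \<beta> A r k a \<inter> Vor A a)"

definition CrN :: "real \<Rightarrow> (real^'n) set \<Rightarrow> real \<Rightarrow> real \<Rightarrow> (real^'n) set" where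
  "CrN \<beta> A r s = Cr \<beta> A r (s * real (card A))"

definition DCrN :: "real \<Rightarrow> (real^'n) set \<Rightarrow> real \<Rightarrow> real \<Rightarrow> (real^'n) set" where
  "DCrN \<beta> A r s = DCr \<beta> A r (s * real (card A))"

definition thick :: "(real^'n) set \<Rightarrow> real \<Rightarrow> (real^'n) set" where
  "thick S \<delta> = (\<Union>x\<in>S. cball x \<delta>)"

definition dPN :: "(real^'n) set \<Rightarrow> (real^'n) set \<Rightarrow> real" where
  "dPN A B = (SUP S \<in> {S. closed S}.
     Inf {\<delta>. \<delta> \<ge> 0 \<and>
       real (card (S \<inter> A)) / real (card A) \<le> real (card (thick S \<delta> \<inter> B)) / real (card B) + \<delta> \<and>
       real (card (S \<inter> B)) / real (card B) \<le> real (card (thick S \<delta> \<inter> A)) / real (card A) + \<delta>})"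

end

theory Submission
  imports Defs
begin
lemma core_attained:
  fixes A :: "(real^'n) set"
  assumes fin: "finite A" and kA: "k \<le> real (card A)"
  shows "\<exists>c. core A k a = ereal c \<and> c \<ge> 0 \<and> k \<le> real (card (cball a c \<inter> A))"
proof -
  define T where "T = {r. r \<ge> 0 \<and> k \<le> real (card (cball a r \<inter> A))}"
  have core: "core A k a = ereal (Inf T)" using kA unfolding core_def T_def by auto
  obtain R where R: "A \<subseteq> cball a R" using finite_imp_bounded[OF fin, unfolded bounded_any_center[of _ a]] by (auto simp: subset_eq)
  have R': "A \<subseteq> cball a (max R 0)" using R by auto
  hence "cball a (max R 0) \<inter> A = A" by blast
  hence RT: "max R 0 \<in> T" using kA unfolding T_def by simp
  have bdd: "bdd_below T" unfolding T_def by (rule bdd_belowI[of _ 0]) auto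
  have ne: "T \<noteq> {}" using RT by blast
  have c0: "Inf T \<ge> 0" using ne by (intro cInf_greatest) (auto simp: T_def)
  have "k \<le> real (card (cball a (Inf T) \<inter> A))"
  proof (cases "A - cball a (Inf T) = {}")
    case True
    hence "cball a (Inf T) \<inter> A = A" by blast
    thus ?thesis using kA by simp
  next
    case False
    define e where "e = Min ((\<lambda>y. dist a y - Inf T) ` (A - cball a (Inf T)))"
    have fin2: "finite ((\<lambda>y. dist a y - Inf T) ` (A - cball a (Inf T)))" using fin by auto
    have epos: "e > 0" unfolding e_def using fin2 False by (simp add: Min_gr_iff)
    have "Inf T < Inf T + e" using epos by simp
    then obtain \<rho> where \<rho>: "\<rho> \<in> T" "\<rho> < Inf T + e" using cInf_less_iff[OF ne bdd] by blast
    have sub: "cball a \<rho> \<inter> A \<subseteq> cball a (Inf T) \<inter> A"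
    proof
      fix y assume y: "y \<in> cball a \<rho> \<inter> A"
      show "y \<in> cball a (Inf T) \<inter> A"
      proof (rule ccontr)
        assume "y \<notin> cball a (Inf T) \<inter> A"
        hence "y \<in> A - cball a (Inf T)" using y by blast
        hence "e \<le> dist a y - Inf T" unfolding e_def using fin2 by (intro Min_le) auto
        thus False using y \<rho> by auto
      qed
    qed
    have "k \<le> real (card (cball a \<rho> \<inter> A))" using \<rho> by (auto simp: T_def)
    also have "\<dots> \<le> real (card (cball a (Inf T) \<inter> A))" using sub fin by (simp add: card_mono)
    finally show ?thesis .
  qed
  thus ?thesis using core c0 by blast
qed

lemma core_le:
  fixes A :: "(real^'n) set"
  assumes kA: "k \<le> real (card A)" and "\<rho> \<ge> 0" and "k \<le> real (card (cball b \<rho> \<inter> A))"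
  shows "\<exists>c. core A k b = ereal c \<and> c \<le> \<rho>"
proof -
  define T where "T = {r. r \<ge> 0 \<and> k \<le> real (card (cball b r \<inter> A))}"
  have core: "core A k b = ereal (Inf T)" using kA unfolding core_def T_def by auto
  have bdd: "bdd_below T" unfolding T_def by (rule bdd_belowI[of _ 0]) auto
  have "Inf T \<le> \<rho>" using assms bdd by (intro cInf_lower) (auto simp: T_def)
  thus ?thesis using core by blast
qed


lemma thick_cball: "thick (cball a c) d \<subseteq> cball a (c + d)"
  unfolding thick_def by (auto simp: dist_commute) (smt (verit) dist_triangle)

lemma Lam_le_D:
  assumes "Lam \<beta> A k a x \<le> ereal r" "\<beta> > 0"
  shows "core A k a \<noteq> \<infinity> \<and> ereal \<beta> * core A k a \<le> ereal r \<and> dist a x \<le> r"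
  using assms unfolding Lam_def by auto

lemma one_dir:
  fixes A B :: "(real^'n) set" and \<beta> \<delta> r s :: real
  assumes finA: "finite A" "A \<noteq> {}" and finB: "finite B" "B \<noteq> {}"
    and "\<beta> > 0" and "\<delta> > 0"
    and H: "\<forall>S. closed S \<longrightarrow> real (card (S \<inter> A)) / real (card A) \<le> real (card (thick S \<delta> \<inter> B)) / real (card B) + \<delta>"
    and "r > 0" and "s > \<delta>"
    and a: "a \<in> A" and La: "Lam \<beta> A (s * real (card A)) a x \<le> ereal r"
  shows "\<exists>b\<in>B. Lam \<beta> B ((s - \<delta>) * real (card B)) b x \<le> ereal (max (2 * (r + \<beta> * \<delta>)) ((1 + 1 / \<beta>) * r + \<delta>))"
    and "\<exists>b\<in>B. Lam \<beta> B ((s - \<delta>) * real (card B)) b x \<le> ereal (max 1 (2 * \<beta>) * ((1 + 1 / \<beta>) * r + \<delta>)) \<and> x \<in> Vor B b"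
proof -
  let ?k = "s * real (card A)"
  let ?k' = "(s - \<delta>) * real (card B)"
  have cA: "card A > 0" "card B > 0" using finA finB by (auto simp: card_gt_0_iff)
  from Lam_le_D[OF La \<open>\<beta> > 0\<close>] have ninf: "core A ?k a \<noteq> \<infinity>"
    and cle: "ereal \<beta> * core A ?k a \<le> ereal r" and dax: "dist a x \<le> r" by auto
  have kA: "?k \<le> real (card A)" using ninf unfolding core_def by (auto split: if_splits)
  hence s1: "s \<le> 1" using cA by simp
  obtain c where c: "core A ?k a = ereal c" "c \<ge> 0" "?k \<le> real (card (cball a c \<inter> A))"
    using core_attained[OF finA(1) kA] by blast
  have bc: "\<beta> * c \<le> r" using cle c(1) by simp
  hence cr: "c \<le> r / \<beta>" using \<open>\<beta> > 0\<close> by (simp add: field_simps)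
  have "s \<le> real (card (cball a c \<inter> A)) / real (card A)" using c(3) cA by (simp add: field_simps)
  also have "\<dots> \<le> real (card (thick (cball a c) \<delta> \<inter> B)) / real (card B) + \<delta>" using H by auto
  also have "\<dots> \<le> real (card (cball a (c + \<delta>) \<inter> B)) / real (card B) + \<delta>"
    using thick_cball[of a c \<delta>] finB cA
    by (intro add_right_mono divide_right_mono) (auto intro!: card_mono)
  finally have kB: "?k' \<le> real (card (cball a (c + \<delta>) \<inter> B))" using cA by (simp add: field_simps)
  have k'B: "?k' \<le> real (card B)" using s1 \<open>\<delta> > 0\<close> mult_right_mono[of "s - \<delta>" 1 "real (card B)"] by simp
  have "?k' > 0" using \<open>s > \<delta>\<close> cA by simp
  hence "card (cball a (c + \<delta>) \<inter> B) > 0" using kB by linarith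
  then obtain b0 where b0: "b0 \<in> B" "dist a b0 \<le> c + \<delta>" by (auto simp: card_gt_0_iff)
  have incl: "?k' \<le> real (card (cball b \<rho> \<inter> B))" if "dist b a + c + \<delta> \<le> \<rho>" for b \<rho>
  proof -
    have "cball a (c + \<delta>) \<subseteq> cball b \<rho>" using that
      by (auto simp: dist_commute) (smt (verit) dist_triangle dist_commute)
    hence "card (cball a (c + \<delta>) \<inter> B) \<le> card (cball b \<rho> \<inter> B)" using finB by (auto intro!: card_mono)
    thus ?thesis using kB by linarith
  qed
  define R where "R = (1 + 1 / \<beta>) * r + \<delta>"
  have cR: "c + \<delta> + r \<le> R" using cr by (simp add: R_def algebra_simps)
  have db0x: "dist b0 x \<le> c + \<delta> + r" using b0 dax dist_triangle[of b0 x a] by (simp add: dist_commute)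
  show "\<exists>b\<in>B. Lam \<beta> B ?k' b x \<le> ereal (max (2 * (r + \<beta> * \<delta>)) ((1 + 1 / \<beta>) * r + \<delta>))"
  proof (intro bexI[OF _ b0(1)])
    obtain c' where c': "core B ?k' b0 = ereal c'" "c' \<le> 2 * (c + \<delta>)"
      using core_le[OF k'B, of "2 * (c + \<delta>)" b0] incl[of b0 "2 * (c + \<delta>)"] b0 c(2) \<open>\<delta> > 0\<close>
      by (auto simp: dist_commute)
    have "\<beta> * c' \<le> \<beta> * (2 * (c + \<delta>))" using c'(2) \<open>\<beta> > 0\<close> by simp
    also have "\<dots> \<le> 2 * (r + \<beta> * \<delta>)" using bc by (simp add: algebra_simps)
    finally have "\<beta> * c' \<le> 2 * (r + \<beta> * \<delta>)" .
    thus "Lam \<beta> B ?k' b0 x \<le> ereal (max (2 * (r + \<beta> * \<delta>)) ((1 + 1 / \<beta>) * r + \<delta>))"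
      using db0x cR unfolding Lam_def c'(1) R_def by (auto simp: le_max_iff_disj)
  qed
  obtain b where b: "b \<in> B" "dist b x = Min ((\<lambda>y. dist y x) ` B)"
    using finB by (metis (no_types, lifting) Min_in finite_imageI image_iff image_is_empty)
  have bmin: "dist b x \<le> dist y x" if "y \<in> B" for y using b(2) finB that by simp
  have dbx: "dist b x \<le> R" using bmin[OF b0(1)] db0x cR by linarith
  have R0: "R \<ge> 0" using cR c(2) \<open>\<delta> > 0\<close> \<open>r > 0\<close> by linarith
  show "\<exists>b\<in>B. Lam \<beta> B ?k' b x \<le> ereal (max 1 (2 * \<beta>) * ((1 + 1 / \<beta>) * r + \<delta>)) \<and> x \<in> Vor B b"
  proof (intro bexI[OF _ b(1)] conjI)
    have "dist b a + c + \<delta> \<le> 2 * R" using dbx dax cR dist_triangle[of b a x] by (simp add: dist_commute)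
    then obtain c' where c': "core B ?k' b = ereal c'" "c' \<le> 2 * R"
      using core_le[OF k'B, of "2 * R" b] incl[of b "2 * R"] R0 by auto
    have "\<beta> * c' \<le> 2 * \<beta> * R" using c'(2) \<open>\<beta> > 0\<close> by simp
    also have "\<dots> \<le> max 1 (2 * \<beta>) * R" using R0 by (intro mult_right_mono) auto
    finally have 1: "\<beta> * c' \<le> max 1 (2 * \<beta>) * R" .
    have "dist b x \<le> 1 * R" using dbx by simp
    also have "\<dots> \<le> max 1 (2 * \<beta>) * R" using R0 by (intro mult_right_mono) auto
    finally have 2: "dist b x \<le> max 1 (2 * \<beta>) * R" .
    show "Lam \<beta> B ?k' b x \<le> ereal (max 1 (2 * \<beta>) * ((1 + 1 / \<beta>) * r + \<delta>))"
      using 1 2 unfolding Lam_def c'(1) R_def by (auto simp: le_max_iff_disj)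
    show "x \<in> Vor B b" using bmin unfolding Vor_def by auto
  qed
qed


lemma frac_le1: "finite A \<Longrightarrow> real (card (S \<inter> A)) / real (card A) \<le> 1"
  by (cases "card A = 0") (auto simp: divide_le_eq_1 card_mono)

lemma prok:
  fixes A B :: "(real^'n) set"
  assumes finA: "finite A" and finB: "finite B" and lt: "dPN A B < \<delta>"
  shows "\<delta> > 0 \<and> (\<forall>S. closed S \<longrightarrow>
       real (card (S \<inter> A)) / real (card A) \<le> real (card (thick S \<delta> \<inter> B)) / real (card B) + \<delta> \<and>
       real (card (S \<inter> B)) / real (card B) \<le> real (card (thick S \<delta> \<inter> A)) / real (card A) + \<delta>)"
proof -
  define Q where "Q S d \<longleftrightarrow> d \<ge> 0 \<and>
       real (card (S \<inter> A)) / real (card A) \<le> real (card (thick S d \<inter> B)) / real (card B) + d \<and>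
       real (card (S \<inter> B)) / real (card B) \<le> real (card (thick S d \<inter> A)) / real (card A) + d" for S d
  have dP: "dPN A B = (SUP S \<in> {S. closed S}. Inf {d. Q S d})" unfolding dPN_def Q_def by simp
  have one: "Q S 1" for S
    using frac_le1[OF finA, of S] frac_le1[OF finB, of S] unfolding Q_def
    by (auto intro: add_increasing)
  have bddb: "bdd_below {d. Q S d}" for S by (rule bdd_belowI[of _ 0]) (auto simp: Q_def)
  have le1: "Inf {d. Q S d} \<le> 1" for S using one bddb by (intro cInf_lower) auto
  have bdd: "bdd_above ((\<lambda>S. Inf {d. Q S d}) ` {S. closed S})" by (rule bdd_aboveI[of _ 1]) (auto intro: le1)
  have mono: "Q S e" if "Q S d" "d \<le> e" for S d e
  proof -
    have "thick S d \<subseteq> thick S e" using that unfolding thick_def by auto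
    hence "card (thick S d \<inter> B) \<le> card (thick S e \<inter> B)" "card (thick S d \<inter> A) \<le> card (thick S e \<inter> A)"
      using finA finB by (auto intro!: card_mono)
    hence "real (card (thick S d \<inter> B)) / real (card B) \<le> real (card (thick S e \<inter> B)) / real (card B)"
      "real (card (thick S d \<inter> A)) / real (card A) \<le> real (card (thick S e \<inter> A)) / real (card A)"
      by (auto intro!: divide_right_mono)
    thus ?thesis using that unfolding Q_def by linarith
  qed
  have QS: "Q S \<delta>" if "closed S" for S
  proof -
    have "Inf {d. Q S d} \<le> dPN A B" unfolding dP using bdd that by (intro cSUP_upper) auto
    hence "Inf {d. Q S d} < \<delta>" using lt by linarith
    then obtain d where "Q S d" "d < \<delta>" using cInf_less_iff[OF _ bddb, of _ \<delta>] one by blast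
    thus ?thesis using mono by auto
  qed
  have "\<delta> > 0"
  proof -
    have "Inf {d. Q {} d} \<le> dPN A B" unfolding dP using bdd by (intro cSUP_upper) auto
    hence "Inf {d. Q {} d} < \<delta>" using lt by linarith
    then obtain d where "Q {} d" "d < \<delta>" using cInf_less_iff[OF _ bddb, of _ \<delta>] one by blast
    thus ?thesis unfolding Q_def by linarith
  qed
  thus ?thesis using QS unfolding Q_def by blast
qed

theorem mainTheorem9:
  fixes A B :: "(real^'n) set" and \<beta> \<delta> r s :: real
  assumes "finite A" "A \<noteq> {}" "finite B" "B \<noteq> {}"
    and "\<beta> > 0" and "\<delta> > dPN A B"
    and "r > 0" and "s > \<delta>"
  shows "CrN \<beta> A r s \<subseteq> CrN \<beta> B (max (2 * (r + \<beta> * \<delta>)) ((1 + 1 / \<beta>) * r + \<delta>)) (s - \<delta>)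
       \<and> CrN \<beta> B r s \<subseteq> CrN \<beta> A (max (2 * (r + \<beta> * \<delta>)) ((1 + 1 / \<beta>) * r + \<delta>)) (s - \<delta>)
       \<and> DCrN \<beta> A r s \<subseteq> DCrN \<beta> B (max 1 (2 * \<beta>) * ((1 + 1 / \<beta>) * r + \<delta>)) (s - \<delta>)
       \<and> DCrN \<beta> B r s \<subseteq> DCrN \<beta> A (max 1 (2 * \<beta>) * ((1 + 1 / \<beta>) * r + \<delta>)) (s - \<delta>)"
proof -
  note P = prok[OF assms(1,3,6)]
  have d0: "\<delta> > 0" using P by (rule conjunct1)
  have HA: "\<forall>S. closed S \<longrightarrow> real (card (S \<inter> A)) / real (card A) \<le> real (card (thick S \<delta> \<inter> B)) / real (card B) + \<delta>"
    using conjunct2[OF P] unfolding all_conj_distrib imp_conjR by (rule conjunct1)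
  have HB: "\<forall>S. closed S \<longrightarrow> real (card (S \<inter> B)) / real (card B) \<le> real (card (thick S \<delta> \<inter> A)) / real (card A) + \<delta>"
    using conjunct2[OF P] unfolding all_conj_distrib imp_conjR by (rule conjunct2)
  note AB = one_dir[OF assms(1,2,3,4,5) d0 HA assms(7,8)]
  note BA = one_dir[OF assms(3,4,1,2,5) d0 HB assms(7,8)]
  show ?thesis
  proof (intro conjI subsetI)
    fix x assume "x \<in> CrN \<beta> A r s"
    then obtain a where "a \<in> A" "Lam \<beta> A (s * real (card A)) a x \<le> ereal r"
      unfolding CrN_def Cr_def Bcr_def by blast
    from AB(1)[OF this] show "x \<in> CrN \<beta> B (max (2 * (r + \<beta> * \<delta>)) ((1 + 1 / \<beta>) * r + \<delta>)) (s - \<delta>)"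
      unfolding CrN_def Cr_def Bcr_def by blast
  next
    fix x assume "x \<in> CrN \<beta> B r s"
    then obtain a where "a \<in> B" "Lam \<beta> B (s * real (card B)) a x \<le> ereal r"
      unfolding CrN_def Cr_def Bcr_def by blast
    from BA(1)[OF this] show "x \<in> CrN \<beta> A (max (2 * (r + \<beta> * \<delta>)) ((1 + 1 / \<beta>) * r + \<delta>)) (s - \<delta>)"
      unfolding CrN_def Cr_def Bcr_def by blast
  next
    fix x assume "x \<in> DCrN \<beta> A r s"
    then obtain a where "a \<in> A" "Lam \<beta> A (s * real (card A)) a x \<le> ereal r"
      unfolding DCrN_def DCr_def Bcr_def by blast
    from AB(2)[OF this] show "x \<in> DCrN \<beta> B (max 1 (2 * \<beta>) * ((1 + 1 / \<beta>) * r + \<delta>)) (s - \<delta>)"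
      unfolding DCrN_def DCr_def Bcr_def by blast
  next
    fix x assume "x \<in> DCrN \<beta> B r s"
    then obtain a where "a \<in> B" "Lam \<beta> B (s * real (card B)) a x \<le> ereal r"
      unfolding DCrN_def DCr_def Bcr_def by blast
    from BA(2)[OF this] show "x \<in> DCrN \<beta> A (max 1 (2 * \<beta>) * ((1 + 1 / \<beta>) * r + \<delta>)) (s - \<delta>)"
      unfolding DCrN_def DCr_def Bcr_def by blast
  qed
qed

end
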